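(* Let $C^*>0$, $\tilde C_1=C^*+\tfrac12$, $\beta>0$, $A\ge0$, $\tau>0$. Let $V\in\mathcal C_{\rm per}$ be real-valued with $\|V\|_\infty\le C^*$, and let $\phi^n\in\mathcal C_{\rm per}$ satisfy $\|\phi^n\|_2=1$, $\|\phi^n\|_\infty\le\tilde C_1$, $\|\Delta_h\phi^n\|_2\le\tilde C_1$. Let $\tilde\phi^{n+1},\phi^{n+1}$ be produced from $\phi^n$ by the scheme in the context. Let $\Phi^{n+1}\in\mathcal C_{\rm per}$ satisfy $\|\Phi^{n+1}\|_2=1$ and $\|\Delta_h\Phi^{n+1}\|_2\le C^*$, and set $\tilde e^{n+1}=\Phi^{n+1}-\tilde\phi^{n+1}$, $e^{n+1}=\Phi^{n+1}-\phi^{n+1}$. Assume $\|\Delta_h\tilde e^{n+1}\|_2\le2(\tau^{7/8}+h^{7/4})$. Then there exist constants $\tilde C_6,\tilde C_7,\tilde C_8>0$ depending only on $C^*$ and $\beta$, and a threshold on $\tau,h$ depending only on the same quantities, such that for all sufficiently small $\tau,h$: (i) $0\le\|\tilde\phi^{n+1}\|_2-1\le\tilde C_6\tau^2$; (ii) $\|e^{n+1}\|_2^2+(\|\tilde\phi^{n+1}\|_2-1)^2\le\|\tilde e^{n+1}\|_2^2\le2\big(\|e^{n+1}\|_2^2+(\|\tilde\phi^{n+1}\|_2-1)^2\big)$; (iii) $\|\Delta_he^{n+1}\|_2^2\le(1+\tau)\|\Delta_h\tilde e^{n+1}\|_2^2+\tilde C_7\tau^{-1}(\|\tilde\phi^{n+1}\|_2-1)^2$;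 (iv) $\|\Delta_h\tilde e^{n+1}\|_2^2\le2\|\Delta_he^{n+1}\|_2^2+\tilde C_8(\|\tilde\phi^{n+1}\|_2-1)^2$.
   Context: Grid setting: $\Omega=(0,1)^3$, $N=2K+1$ odd, $h=1/N$. $\mathcal C_{\rm per}$ is the space of complex-valued grid functions on the points $(ih,jh,kh)$, $N$-periodic in each index. Discrete inner product $\langle f,g\rangle=h^3\sum_{i,j,k=1}^N\overline{f_{i,j,k}}\,g_{i,j,k}$, $\|f\|_2=\langle f,f\rangle^{1/2}$, $\|f\|_\infty=\max|f_{i,j,k}|$. Forward differences $D_xf_{i+1/2,j,k}=(f_{i+1,j,k}-f_{i,j,k})/h$ (similarly $D_y,D_z$), $\nabla_hf=(D_xf,D_yf,D_zf)$, and $\Delta_h=D_x^2+D_y^2+D_z^2$. Every $f\in\mathcal C_{\rm per}$ has a discrete Fourier expansion $f_{i,j,k}=\sum_{\ell,m,n=-K}^K\hat f_{\ell,m,n}e^{2\pi\mathrm{i}(\ell x_i+my_j+nz_k)}$, and $-\Delta_h$ multiplies $\hat f_{\ell,m,n}$ by $\lambda_{\ell,m,n}=\frac4{h^2}(\sin^2(\ell\pi h)+\sin^2(m\pi h)+\sin^2(n\pi h))$. With $\varphi_1(x)=(1-e^{-x})/x$ for $x>0$, $\varphi_1(0)=1$, $\mathcal G_h=(-\tfrac12\tau\Delta_h)^{-1}(I-e^{\frac12\tau\Delta_h})$ is the Fourier multiplier with symbol $\varphi_1(\tfrac12\tau\lambda_{\ell,m,n})$ and $\mathcal G_h^{1/2}$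 the multiplier with symbol $\varphi_1(\tfrac12\tau\lambda_{\ell,m,n})^{1/2}$, applied componentwise to vector grid functions (so $\|\mathcal G_h^{1/2}\nabla_hf\|_2^2=\langle\mathcal G_hf,-\Delta_hf\rangle$). The scheme: given $\phi^n$, set $\lambda^n=\frac12\|\mathcal G_h^{1/2}\nabla_h\phi^n\|_2^2+\langle V\phi^n+\beta|\phi^n|^2\phi^n,\phi^n\rangle$, define $\tilde\phi^{n+1}$ by $$\frac{\tilde\phi^{n+1}-\phi^n}{\tau}=\frac12\mathcal G_h\Delta_h\phi^n-V\phi^n-\beta|\phi^n|^2\phi^n+\lambda^n\phi^n-A(\tilde\phi^{n+1}-\phi^n)$$ (products pointwise), and $\phi^{n+1}=\tilde\phi^{n+1}/\|\tilde\phi^{n+1}\|_2$. *)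

theory Defs
  imports "HOL-Analysis.Analysis"
begin

text \<open>Grid functions on the points (ih,jh,kh), h = 1/N, indexed by integers;
  membership in C_per is expressed by the predicate gper N.\<close>

type_synonym grid = "int \<Rightarrow> int \<Rightarrow> int \<Rightarrow> complex"

definition gper :: "nat \<Rightarrow> grid \<Rightarrow> bool" where
  "gper N f \<longleftrightarrow> (\<forall>i j k. f (i + int N) j k = f i j k \<and> f i (j + int N) k = f i j k
                          \<and> f i j (k + int N) = f i j k)"

definition gsum :: "nat \<Rightarrow> (int \<Rightarrow> int \<Rightarrow> int \<Rightarrow> 'a::comm_monoid_add) \<Rightarrow> 'a" where
  "gsum N F = (\<Sum>i\<in>{1..int N}. \<Sum>j\<in>{1..int N}. \<Sum>k\<in>{1..int N}. F i j k)"

definition ginner :: "nat \<Rightarrow> grid \<Rightarrow> grid \<Rightarrow> complex" where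
  "ginner N f g = complex_of_real ((1 / real N) ^ 3) * gsum N (\<lambda>i j k. cnj (f i j k) * g i j k)"

definition gnorm2 :: "nat \<Rightarrow> grid \<Rightarrow> real" where
  "gnorm2 N f = sqrt ((1 / real N) ^ 3 * gsum N (\<lambda>i j k. (cmod (f i j k))\<^sup>2))"

definition gnorminf :: "nat \<Rightarrow> grid \<Rightarrow> real" where
  "gnorminf N f = Max ((\<lambda>(i,j,k). cmod (f i j k)) ` ({1..int N} \<times> {1..int N} \<times> {1..int N}))"

text \<open>Forward differences: (Dx f) i j k stores the value at the half point (i+1/2, j, k).\<close>
definition Dx :: "nat \<Rightarrow> grid \<Rightarrow> grid" where
  "Dx N f = (\<lambda>i j k. (f (i + 1) j k - f i j k) * of_nat N)"
definition Dy :: "nat \<Rightarrow> grid \<Rightarrow> grid" where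
  "Dy N f = (\<lambda>i j k. (f i (j + 1) k - f i j k) * of_nat N)"
definition Dz :: "nat \<Rightarrow> grid \<Rightarrow> grid" where
  "Dz N f = (\<lambda>i j k. (f i j (k + 1) - f i j k) * of_nat N)"

definition lap :: "nat \<Rightarrow> grid \<Rightarrow> grid" where
  "lap N f = (\<lambda>i j k.
      (Dx N f i j k - Dx N f (i - 1) j k) * of_nat N
    + (Dy N f i j k - Dy N f i (j - 1) k) * of_nat N
    + (Dz N f i j k - Dz N f i j (k - 1)) * of_nat N)"

text \<open>Discrete Fourier coefficients and Fourier multipliers (N = 2K+1, modes -K..K).\<close>
definition fcoef :: "nat \<Rightarrow> grid \<Rightarrow> int \<Rightarrow> int \<Rightarrow> int \<Rightarrow> complex" where
  "fcoef N f l m n = complex_of_real ((1 / real N) ^ 3) *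
     gsum N (\<lambda>i j k. f i j k *
        exp (- 2 * pi * \<i> * complex_of_real (real_of_int (l * i + m * j + n * k) / real N)))"

definition fmult :: "nat \<Rightarrow> (int \<Rightarrow> int \<Rightarrow> int \<Rightarrow> real) \<Rightarrow> grid \<Rightarrow> grid" where
  "fmult N s f = (\<lambda>i j k.
     (\<Sum>l\<in>{- int (N div 2)..int (N div 2)}. \<Sum>m\<in>{- int (N div 2)..int (N div 2)}.
      \<Sum>n\<in>{- int (N div 2)..int (N div 2)}.
        complex_of_real (s l m n) * fcoef N f l m n *
        exp (2 * pi * \<i> * complex_of_real (real_of_int (l * i + m * j + n * k) / real N))))"

definition lam :: "nat \<Rightarrow> int \<Rightarrow> int \<Rightarrow> int \<Rightarrow> real" where
  "lam N l m n = 4 * (real N)\<^sup>2 *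
     ((sin (real_of_int l * pi / real N))\<^sup>2 + (sin (real_of_int m * pi / real N))\<^sup>2
      + (sin (real_of_int n * pi / real N))\<^sup>2)"

definition phi1 :: "real \<Rightarrow> real" where
  "phi1 x = (if x = 0 then 1 else (1 - exp (- x)) / x)"

definition Gh :: "nat \<Rightarrow> real \<Rightarrow> grid \<Rightarrow> grid" where
  "Gh N \<tau> = fmult N (\<lambda>l m n. phi1 (\<tau> / 2 * lam N l m n))"

definition Gh_half :: "nat \<Rightarrow> real \<Rightarrow> grid \<Rightarrow> grid" where
  "Gh_half N \<tau> = fmult N (\<lambda>l m n. sqrt (phi1 (\<tau> / 2 * lam N l m n)))"

definition gradG_sq :: "nat \<Rightarrow> real \<Rightarrow> grid \<Rightarrow> real" where
  "gradG_sq N \<tau> f = (gnorm2 N (Gh_half N \<tau> (Dx N f)))\<^sup>2 + (gnorm2 N (Gh_half N \<tau> (Dy N f)))\<^sup>2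
                     + (gnorm2 N (Gh_half N \<tau> (Dz N f)))\<^sup>2"

definition lagr :: "nat \<Rightarrow> real \<Rightarrow> grid \<Rightarrow> real \<Rightarrow> grid \<Rightarrow> complex" where
  "lagr N \<tau> V \<beta> \<phi> = complex_of_real (gradG_sq N \<tau> \<phi> / 2)
     + ginner N (\<lambda>i j k. V i j k * \<phi> i j k
                  + complex_of_real \<beta> * (complex_of_real (cmod (\<phi> i j k)))\<^sup>2 * \<phi> i j k) \<phi>"

definition scheme_stage :: "nat \<Rightarrow> real \<Rightarrow> real \<Rightarrow> grid \<Rightarrow> real \<Rightarrow> grid \<Rightarrow> grid \<Rightarrow> bool" where
  "scheme_stage N \<tau> A V \<beta> \<phi> \<phi>t \<longleftrightarrow>
    (\<forall>i j k. (\<phi>t i j k - \<phi> i j k) / complex_of_real \<tau> =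
        Gh N \<tau> (lap N \<phi>) i j k / 2 - V i j k * \<phi> i j k
        - complex_of_real \<beta> * (complex_of_real (cmod (\<phi> i j k)))\<^sup>2 * \<phi> i j k
        + lagr N \<tau> V \<beta> \<phi> * \<phi> i j k
        - complex_of_real A * (\<phi>t i j k - \<phi> i j k))"

end

theory Submission
  imports Defs
begin

definition ee :: "nat \<Rightarrow> int \<Rightarrow> complex" where
  "ee N a = exp (2 * pi * \<i> * complex_of_real (real_of_int a / real N))"

lemma ee_add: "ee N (a + b) = ee N a * ee N b"
  unfolding ee_def by (simp add: add_divide_distrib exp_add[symmetric] algebra_simps)

lemma ee_0[simp]: "ee N 0 = 1"
  unfolding ee_def by simp

lemma ee_cnj: "cnj (ee N a) = ee N (- a)"
  unfolding ee_def by (simp add: exp_cnj)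

lemma ee_neg_mult: "ee N a * ee N (- a) = 1"
  by (metis ee_add ee_0 add.right_inverse)

lemma ee_norm[simp]: "cmod (ee N a) = 1"
  unfolding ee_def by (simp add: norm_exp_eq_Re)

lemma ee_per: assumes "N > 0" shows "ee N (int N * t) = 1"
proof -
  have "ee N (int N * t) = exp (\<i> * (complex_of_int t * (complex_of_real pi * 2)))"
    unfolding ee_def using assms by (simp add: algebra_simps)
  thus ?thesis by (simp add: exp_2pi_1_int)
qed

lemma ee_per2: assumes "N > 0" shows "ee N (a + int N * t) = ee N a"
  by (simp add: ee_add ee_per assms)

lemma ee_eq_1: assumes "N > 0" "ee N d = 1" shows "int N dvd d"
proof -
  from assms(2) obtain n where "Im (2 * pi * \<i> * complex_of_real (real_of_int d / real N)) = real_of_int (2 * n) * pi"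
    unfolding ee_def exp_eq_1 by blast
  hence "2 * pi * (real_of_int d / real N) = 2 * real_of_int n * pi" by simp
  hence "real_of_int d = real_of_int n * real N" using assms(1) by (simp add: field_simps)
  hence "d = n * int N" by (metis of_int_eq_iff of_int_mult of_int_of_nat_eq)
  thus ?thesis by simp
qed

lemma sum_shift_per:
  fixes G :: "int \<Rightarrow> 'a::comm_monoid_add"
  assumes "\<And>i. G (i + int N) = G i"
  shows "(\<Sum>i\<in>{1..int N}. G (i + 1)) = (\<Sum>i\<in>{1..int N}. G i)"
proof (cases "N = 0")
  case True thus ?thesis by simp
next
  case False
  have "(\<Sum>i\<in>{1..int N}. G (i + 1)) = sum G ((\<lambda>i. i + 1) ` {1..int N})"
    by (subst sum.reindex) (auto simp: inj_on_def)
  also have "(\<lambda>i. i + 1) ` {1..int N} = {2..int N + 1}"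
    by (auto simp: image_iff)
  also have "{2..int N + 1} = insert (1 + int N) {2..int N}" using False
    by (subst atLeastAtMostPlus1_int_conv[symmetric]) (auto simp: add.commute)
  also have "sum G \<dots> = G (1 + int N) + sum G {2..int N}" by simp
  also have "G (1 + int N) = G 1" using assms[of 1] by simp
  also have "{1..int N} = insert 1 {2..int N}" using False by auto
  hence "sum G {1..int N} = G 1 + sum G {2..int N}" by simp
  finally show ?thesis by simp
qed

lemma sum_shift_per_m:
  fixes G :: "int \<Rightarrow> 'a::comm_monoid_add"
  assumes "\<And>i. G (i + int N) = G i"
  shows "(\<Sum>i\<in>{1..int N}. G (i - 1)) = (\<Sum>i\<in>{1..int N}. G i)"
proof -
  have "\<And>i. G (i + int N - 1) = G (i - 1)" using assms by (metis diff_add_eq)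
  thus ?thesis using sum_shift_per[of "\<lambda>i. G (i - 1)" N] by simp
qed

lemma orth1:
  assumes "N > 0" "\<bar>d\<bar> < int N"
  shows "(\<Sum>i\<in>{1..int N}. ee N (d * i)) = (if d = 0 then of_nat N else 0)"
proof (cases "d = 0")
  case True thus ?thesis by simp
next
  case False
  let ?T = "\<Sum>i\<in>{1..int N}. ee N (d * i)"
  have "ee N d * ?T = (\<Sum>i\<in>{1..int N}. ee N (d * (i + 1)))"
    by (simp add: sum_distrib_left ee_add[symmetric] algebra_simps)
  also have "\<dots> = ?T"
  proof (rule sum_shift_per)
    fix i
    have "d * (i + int N) = d * i + int N * d" by (simp add: algebra_simps)
    thus "ee N (d * (i + int N)) = ee N (d * i)" by (simp only: ee_per2[OF assms(1)])
  qed
  finally have "(ee N d - 1) * ?T = 0" by (simp add: algebra_simps)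
  moreover have "ee N d \<noteq> 1"
  proof
    assume "ee N d = 1"
    then have "int N dvd d" using ee_eq_1 assms by blast
    then show False using False assms(2) using dvd_imp_le_int[of d "int N"] by simp
  qed
  ultimately show ?thesis using False by simp
qed

definition QQ :: "nat \<Rightarrow> (int \<times> int \<times> int) set" where
  "QQ N = {1..int N} \<times> {1..int N} \<times> {1..int N}"
definition MM :: "nat \<Rightarrow> (int \<times> int \<times> int) set" where
  "MM N = {- int (N div 2)..int (N div 2)} \<times> {- int (N div 2)..int (N div 2)} \<times> {- int (N div 2)..int (N div 2)}"
definition dp :: "int \<times> int \<times> int \<Rightarrow> int \<times> int \<times> int \<Rightarrow> int" where
  "dp y x = fst y * fst x + fst (snd y) * fst (snd x) + snd (snd y) * snd (snd x)"

abbreviation h3 :: "nat \<Rightarrow> complex" where "h3 N \<equiv> complex_of_real ((1 / real N) ^ 3)"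

lemma finite_QQ[simp]: "finite (QQ N)" by (simp add: QQ_def)
lemma finite_MM[simp]: "finite (MM N)" by (simp add: MM_def)

lemma gsum_prod: "gsum N F = (\<Sum>x\<in>QQ N. F (fst x) (fst (snd x)) (snd (snd x)))"
  unfolding gsum_def QQ_def by (simp add: sum.cartesian_product split_beta)

lemma kern_m: "exp (- 2 * pi * \<i> * complex_of_real (real_of_int a / real N)) = ee N (- a)"
  unfolding ee_def by simp

lemma fcoef_prod: "fcoef N f l m n = h3 N * (\<Sum>x\<in>QQ N. f (fst x) (fst (snd x)) (snd (snd x)) * ee N (- dp (l,m,n) x))"
  unfolding fcoef_def gsum_prod kern_m dp_def by (simp add: algebra_simps)

lemma fmult_prod: "fmult N s f i j k = (\<Sum>y\<in>MM N. complex_of_real (s (fst y) (fst (snd y)) (snd (snd y)))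
    * fcoef N f (fst y) (fst (snd y)) (snd (snd y)) * ee N (dp y (i,j,k)))"
  unfolding fmult_def MM_def dp_def ee_def by (simp add: sum.cartesian_product split_beta)

lemma ginner_prod: "ginner N f g = h3 N * (\<Sum>x\<in>QQ N. cnj (f (fst x) (fst (snd x)) (snd (snd x))) * g (fst x) (fst (snd x)) (snd (snd x)))"
  unfolding ginner_def gsum_prod by simp

lemma gsum_factor: fixes a b c :: "int \<Rightarrow> complex" shows "gsum N (\<lambda>i j k. a i * b j * c k) = sum a {1..int N} * sum b {1..int N} * sum c {1..int N}"
proof -
  have 1: "(\<Sum>k\<in>{1..int N}. a i * b j * c k) = a i * b j * sum c {1..int N}" for i j
    by (simp add: sum_distrib_left)
  have 2: "(\<Sum>j\<in>{1..int N}. a i * b j * sum c {1..int N}) = a i * sum b {1..int N} * sum c {1..int N}" for i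
    by (simp only: sum_distrib_right[symmetric] sum_distrib_left[symmetric])
  show ?thesis unfolding gsum_def by (simp add: 1 2 sum_distrib_right)
qed

lemma orth3:
  assumes "odd N" and y: "y \<in> MM N" and z: "z \<in> MM N"
  shows "(\<Sum>x\<in>QQ N. ee N (dp y x) * ee N (- dp z x)) = (if y = z then of_nat N ^ 3 else 0)"
proof -
  obtain l m n where yy: "y = (l,m,n)" by (cases y) auto
  obtain l' m' n' where zz: "z = (l',m',n')" by (cases z) auto
  have N0: "N > 0" using assms(1) by (cases N) auto
  have bnd: "\<bar>a - b\<bar> < int N" if "a \<in> {- int (N div 2)..int (N div 2)}" "b \<in> {- int (N div 2)..int (N div 2)}" for a b
  proof -
    have "2 * int (N div 2) < int N" using assms(1) by presburger
    thus ?thesis using that by auto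
  qed
  have "(\<Sum>x\<in>QQ N. ee N (dp y x) * ee N (- dp z x))
      = gsum N (\<lambda>i j k. ee N ((l - l') * i) * ee N ((m - m') * j) * ee N ((n - n') * k))"
    unfolding gsum_prod yy zz dp_def
    by (rule sum.cong) (auto simp: ee_add[symmetric] algebra_simps)
  also have "\<dots> = (\<Sum>i\<in>{1..int N}. ee N ((l - l') * i)) * (\<Sum>j\<in>{1..int N}. ee N ((m - m') * j))
         * (\<Sum>k\<in>{1..int N}. ee N ((n - n') * k))"
    by (rule gsum_factor)
  also have "\<dots> = (if y = z then of_nat N ^ 3 else 0)"
    using y z unfolding yy zz MM_def
    by (simp add: orth1[OF N0] bnd power3_eq_cube)
  finally show ?thesis .
qed

definition tr :: "(int \<Rightarrow> int \<Rightarrow> int \<Rightarrow> 'a) \<Rightarrow> int \<times> int \<times> int \<Rightarrow> 'a" where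
  "tr F y = F (fst y) (fst (snd y)) (snd (snd y))"

lemma tr_simp[simp]: "tr F (a,b,c) = F a b c" by (simp add: tr_def)

lemma ginner_fmult:
  "ginner N g (fmult N s f) = (\<Sum>y\<in>MM N. complex_of_real (tr s y) * tr (fcoef N f) y * cnj (tr (fcoef N g) y))"
proof -
  let ?c = "\<lambda>y. complex_of_real (tr s y) * tr (fcoef N f) y"
  have "ginner N g (fmult N s f) = h3 N * (\<Sum>x\<in>QQ N. cnj (tr g x) * (\<Sum>y\<in>MM N. ?c y * ee N (dp y x)))"
    unfolding ginner_prod fmult_prod tr_def by simp
  also have "\<dots> = h3 N * (\<Sum>x\<in>QQ N. \<Sum>y\<in>MM N. cnj (tr g x) * (?c y * ee N (dp y x)))"
    by (simp add: sum_distrib_left)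
  also have "\<dots> = h3 N * (\<Sum>y\<in>MM N. \<Sum>x\<in>QQ N. cnj (tr g x) * (?c y * ee N (dp y x)))"
    by (subst sum.swap) simp
  also have "\<dots> = (\<Sum>y\<in>MM N. ?c y * (h3 N * (\<Sum>x\<in>QQ N. cnj (tr g x) * ee N (dp y x))))"
    by (simp add: sum_distrib_left mult_ac)
  also have "\<dots> = (\<Sum>y\<in>MM N. ?c y * cnj (tr (fcoef N g) y))"
  proof (rule sum.cong[OF refl])
    fix y assume "y \<in> MM N"
    have "cnj (tr (fcoef N g) y) = h3 N * (\<Sum>x\<in>QQ N. cnj (tr g x) * ee N (dp y x))"
      unfolding tr_def fcoef_prod by (simp add: ee_cnj tr_def)
    thus "?c y * (h3 N * (\<Sum>x\<in>QQ N. cnj (tr g x) * ee N (dp y x))) = ?c y * cnj (tr (fcoef N g) y)"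
      by simp
  qed
  finally show ?thesis .
qed

lemma fcoef_fmult:
  assumes "odd N" "z \<in> MM N"
  shows "tr (fcoef N (fmult N s f)) z = complex_of_real (tr s z) * tr (fcoef N f) z"
proof -
  let ?c = "\<lambda>y. complex_of_real (tr s y) * tr (fcoef N f) y"
  have N0: "N > 0" using assms(1) by (cases N) auto
  have "tr (fcoef N (fmult N s f)) z = h3 N * (\<Sum>x\<in>QQ N. (\<Sum>y\<in>MM N. ?c y * ee N (dp y x)) * ee N (- dp z x))"
    unfolding tr_def fcoef_prod fmult_prod by (simp add: tr_def)
  also have "\<dots> = h3 N * (\<Sum>x\<in>QQ N. \<Sum>y\<in>MM N. ?c y * (ee N (dp y x) * ee N (- dp z x)))"
    by (simp only: sum_distrib_right) (simp add: mult_ac)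
  also have "\<dots> = h3 N * (\<Sum>y\<in>MM N. ?c y * (\<Sum>x\<in>QQ N. ee N (dp y x) * ee N (- dp z x)))"
    by (subst sum.swap) (simp add: sum_distrib_left)
  also have "\<dots> = h3 N * (\<Sum>y\<in>MM N. ?c y * (if y = z then of_nat N ^ 3 else 0))"
    using orth3[OF assms(1) _ assms(2)] by simp
  also have "\<dots> = h3 N * (?c z * of_nat N ^ 3)"
    using assms(2) by (simp add: if_distrib sum.delta' cong: if_cong)
  also have "\<dots> = ?c z" using N0 by (simp add: field_simps)
  finally show ?thesis .
qed

lemma gn_sq: "(gnorm2 N f)\<^sup>2 = (1 / real N) ^ 3 * (\<Sum>x\<in>QQ N. (cmod (tr f x))\<^sup>2)"
proof -
  have "0 \<le> (1 / real N) ^ 3 * (\<Sum>x\<in>QQ N. (cmod (tr f x))\<^sup>2)" by (simp add: sum_nonneg)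
  thus ?thesis unfolding gnorm2_def gsum_prod tr_def by simp
qed

lemma gn_ge0[simp]: "0 \<le> gnorm2 N f" unfolding gnorm2_def gsum_def by (simp add: sum_nonneg)

lemma gn_L2: "gnorm2 N f = sqrt ((1 / real N) ^ 3) * L2_set (\<lambda>x. cmod (tr f x)) (QQ N)"
  unfolding gnorm2_def gsum_prod L2_set_def tr_def by (simp add: real_sqrt_mult)

lemma ginner_self: "ginner N f f = complex_of_real ((gnorm2 N f)\<^sup>2)"
proof -
  have "\<And>z. cnj z * z = complex_of_real ((cmod z)\<^sup>2)" by (metis complex_norm_square mult.commute)
  thus ?thesis unfolding ginner_prod gn_sq tr_def by simp
qed

lemma gn_triangle: "gnorm2 N (\<lambda>i j k. f i j k + g i j k) \<le> gnorm2 N f + gnorm2 N g"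
proof -
  have "L2_set (\<lambda>x. cmod (tr f x + tr g x)) (QQ N) \<le> L2_set (\<lambda>x. cmod (tr f x) + cmod (tr g x)) (QQ N)"
    by (rule L2_set_mono) (auto simp: norm_triangle_ineq)
  also have "\<dots> \<le> L2_set (\<lambda>x. cmod (tr f x)) (QQ N) + L2_set (\<lambda>x. cmod (tr g x)) (QQ N)"
    by (rule L2_set_triangle_ineq)
  finally have *: "L2_set (\<lambda>x. cmod (tr f x + tr g x)) (QQ N) \<le> \<dots>" .
  have "gnorm2 N (\<lambda>i j k. f i j k + g i j k) = sqrt ((1 / real N) ^ 3) * L2_set (\<lambda>x. cmod (tr f x + tr g x)) (QQ N)"
    unfolding gn_L2 tr_def by simp
  also have "\<dots> \<le> sqrt ((1 / real N) ^ 3) * (L2_set (\<lambda>x. cmod (tr f x)) (QQ N) + L2_set (\<lambda>x. cmod (tr g x)) (QQ N))"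
    using * by (simp add: mult_left_mono)
  finally show ?thesis unfolding gn_L2 by (simp add: distrib_left)
qed

lemma gn_scale: "gnorm2 N (\<lambda>i j k. c * f i j k) = cmod c * gnorm2 N f"
proof -
  have "L2_set (\<lambda>x. cmod (c * tr f x)) (QQ N) = cmod c * L2_set (\<lambda>x. cmod (tr f x)) (QQ N)"
    by (simp add: L2_set_right_distrib norm_mult)
  thus ?thesis unfolding gn_L2 tr_def by (simp add: mult_ac)
qed

lemma gn_ptwise:
  assumes "\<And>x. x \<in> QQ N \<Longrightarrow> cmod (tr f x) \<le> B * cmod (tr g x)" "B \<ge> 0"
  shows "gnorm2 N f \<le> B * gnorm2 N g"
proof -
  have "L2_set (\<lambda>x. cmod (tr f x)) (QQ N) \<le> L2_set (\<lambda>x. B * cmod (tr g x)) (QQ N)"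
    by (rule L2_set_mono) (use assms in auto)
  also have "\<dots> = B * L2_set (\<lambda>x. cmod (tr g x)) (QQ N)"
    using assms(2) by (simp add: L2_set_right_distrib)
  finally show ?thesis unfolding gn_L2
    by (metis (no_types, lifting) mult.left_commute mult_left_mono real_sqrt_ge_zero zero_le_divide_1_iff zero_le_power of_nat_0_le_iff)
qed

lemma gn_diff: "gnorm2 N (\<lambda>i j k. f i j k - g i j k) \<le> gnorm2 N f + gnorm2 N g"
proof -
  have "gnorm2 N (\<lambda>i j k. f i j k - g i j k) = gnorm2 N (\<lambda>i j k. f i j k + (-1) * g i j k)" by simp
  also have "\<dots> \<le> gnorm2 N f + gnorm2 N (\<lambda>i j k. (-1) * g i j k)" by (rule gn_triangle)
  also have "gnorm2 N (\<lambda>i j k. (-1) * g i j k) = gnorm2 N g" by (subst gn_scale) simp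
  finally show ?thesis .
qed

lemma ginner_CS: "cmod (ginner N f g) \<le> gnorm2 N f * gnorm2 N g"
proof -
  have "cmod (ginner N f g) = (1 / real N) ^ 3 * cmod (\<Sum>x\<in>QQ N. cnj (tr f x) * tr g x)"
    unfolding ginner_prod tr_def by (simp only: norm_mult norm_of_real) simp
  also have "\<dots> \<le> (1 / real N) ^ 3 * (\<Sum>x\<in>QQ N. \<bar>cmod (tr f x)\<bar> * \<bar>cmod (tr g x)\<bar>)"
    by (auto simp: norm_mult intro!: mult_left_mono order.trans[OF norm_sum] sum_mono)
  also have "\<dots> \<le> (1 / real N) ^ 3 * (L2_set (\<lambda>x. cmod (tr f x)) (QQ N) * L2_set (\<lambda>x. cmod (tr g x)) (QQ N))"
    by (intro mult_left_mono L2_set_mult_ineq) auto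
  also have "\<dots> = gnorm2 N f * gnorm2 N g" unfolding gn_L2
    by (simp add: mult_ac power2_eq_square[symmetric] del: real_sqrt_power) 
  finally show ?thesis .
qed

lemma cmod_diff_sq: "(cmod (a - b))\<^sup>2 = (cmod a)\<^sup>2 - 2 * Re (cnj a * b) + (cmod b)\<^sup>2"
  unfolding cmod_power2 by (simp add: power2_eq_square algebra_simps)

lemma cmod_add_sq: "(cmod (a + b))\<^sup>2 = (cmod a)\<^sup>2 + 2 * Re (cnj a * b) + (cmod b)\<^sup>2"
  unfolding cmod_power2 by (simp add: power2_eq_square algebra_simps)

lemma Re_ginner: "Re (ginner N f g) = (1 / real N) ^ 3 * (\<Sum>x\<in>QQ N. Re (cnj (tr f x) * tr g x))"
  unfolding ginner_prod tr_def by (simp add: Re_sum)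

lemma gn_diff_sq: "(gnorm2 N (\<lambda>i j k. f i j k - g i j k))\<^sup>2 = (gnorm2 N f)\<^sup>2 - 2 * Re (ginner N f g) + (gnorm2 N g)\<^sup>2"
  unfolding gn_sq Re_ginner by (simp add: tr_def cmod_diff_sq sum.distrib sum_subtractf sum_distrib_left algebra_simps)

lemma gn_add_sq: "(gnorm2 N (\<lambda>i j k. f i j k + g i j k))\<^sup>2 = (gnorm2 N f)\<^sup>2 + 2 * Re (ginner N f g) + (gnorm2 N g)\<^sup>2"
  unfolding gn_sq Re_ginner by (simp add: tr_def cmod_add_sq sum.distrib sum_distrib_left algebra_simps)

lemma Re_ginner_sym: "Re (ginner N f g) = Re (ginner N g f)"
  unfolding Re_ginner by (simp add: mult.commute)

lemma cnj_mult_self: "z * cnj z = complex_of_real ((cmod z)\<^sup>2)"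
  by (metis complex_norm_square)

lemma gn_fmult_sq:
  assumes "odd N"
  shows "(gnorm2 N (fmult N s f))\<^sup>2 = (\<Sum>y\<in>MM N. (tr s y)\<^sup>2 * (cmod (tr (fcoef N f) y))\<^sup>2)"
proof -
  have "complex_of_real ((gnorm2 N (fmult N s f))\<^sup>2) = ginner N (fmult N s f) (fmult N s f)"
    by (simp add: ginner_self)
  also have "\<dots> = (\<Sum>y\<in>MM N. complex_of_real (tr s y) * tr (fcoef N f) y * cnj (tr (fcoef N (fmult N s f)) y))"
    by (rule ginner_fmult)
  also have "\<dots> = (\<Sum>y\<in>MM N. complex_of_real ((tr s y)\<^sup>2 * (cmod (tr (fcoef N f) y))\<^sup>2))"
  proof (rule sum.cong[OF refl])
    fix y assume y: "y \<in> MM N"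
    have "complex_of_real (tr s y) * tr (fcoef N f) y * cnj (tr (fcoef N (fmult N s f)) y)
        = complex_of_real (tr s y) * complex_of_real (tr s y) * (tr (fcoef N f) y * cnj (tr (fcoef N f) y))"
      by (simp add: fcoef_fmult[OF assms y] mult_ac)
    also have "\<dots> = complex_of_real ((tr s y)\<^sup>2 * (cmod (tr (fcoef N f) y))\<^sup>2)"
      by (simp add: cnj_mult_self power2_eq_square)
    finally show "complex_of_real (tr s y) * tr (fcoef N f) y * cnj (tr (fcoef N (fmult N s f)) y) = \<dots>" .
  qed
  also have "\<dots> = complex_of_real (\<Sum>y\<in>MM N. (tr s y)\<^sup>2 * (cmod (tr (fcoef N f) y))\<^sup>2)"
    by simp
  finally show ?thesis using of_real_eq_iff by blast
qed

lemma bessel: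
  assumes "odd N"
  shows "(\<Sum>y\<in>MM N. (cmod (tr (fcoef N f) y))\<^sup>2) \<le> (gnorm2 N f)\<^sup>2"
proof -
  let ?g = "fmult N (\<lambda>_ _ _. 1) f"
  let ?S = "\<Sum>y\<in>MM N. (cmod (tr (fcoef N f) y))\<^sup>2"
  have 1: "(gnorm2 N ?g)\<^sup>2 = ?S" using gn_fmult_sq[OF assms] by (simp add: tr_def)
  have "ginner N f ?g = (\<Sum>y\<in>MM N. complex_of_real ((cmod (tr (fcoef N f) y))\<^sup>2))"
    apply (subst ginner_fmult)
    apply (rule sum.cong[OF refl])
    apply (simp only: tr_def of_real_1 mult_1_left)
    apply (rule cnj_mult_self)
    done
  hence 2: "Re (ginner N f ?g) = ?S" by (simp add: Re_sum)
  have "0 \<le> (gnorm2 N (\<lambda>i j k. f i j k - ?g i j k))\<^sup>2" by simp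
  also have "\<dots> = (gnorm2 N f)\<^sup>2 - ?S" unfolding gn_diff_sq 1 2 by simp
  finally show ?thesis by simp
qed

lemma fmult_contr:
  assumes "odd N" "\<And>y. y \<in> MM N \<Longrightarrow> \<bar>tr s y\<bar> \<le> 1"
  shows "gnorm2 N (fmult N s f) \<le> gnorm2 N f"
proof -
  have "(gnorm2 N (fmult N s f))\<^sup>2 \<le> (\<Sum>y\<in>MM N. (cmod (tr (fcoef N f) y))\<^sup>2)"
    unfolding gn_fmult_sq[OF assms(1)]
  proof (rule sum_mono)
    fix y assume "y \<in> MM N"
    hence "(tr s y)\<^sup>2 \<le> 1" using assms(2) abs_square_le_1 by blast
    thus "(tr s y)\<^sup>2 * (cmod (tr (fcoef N f) y))\<^sup>2 \<le> (cmod (tr (fcoef N f) y))\<^sup>2"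
      by (simp add: mult_left_le_one_le)
  qed
  also have "\<dots> \<le> (gnorm2 N f)\<^sup>2" by (rule bessel[OF assms(1)])
  finally show ?thesis by (rule power2_le_imp_le) simp
qed

lemma fcoef_ee: "fcoef N f l m n = h3 N * gsum N (\<lambda>i j k. f i j k * ee N (- (l * i + m * j + n * k)))"
  unfolding fcoef_def kern_m by simp

lemma sum_shift_pm:
  fixes G :: "int \<Rightarrow> 'a::comm_monoid_add"
  assumes "a \<in> {1, -1}" "\<And>i. G (i + int N) = G i"
  shows "(\<Sum>i\<in>{1..int N}. G (i + a)) = (\<Sum>i\<in>{1..int N}. G i)"
  using assms sum_shift_per[of G N] sum_shift_per_m[of G N] by auto

lemma ee_perN: "N > 0 \<Longrightarrow> ee N (b + l * int N) = ee N b"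
  by (metis ee_per2 mult.commute)

lemma ee_shift3:
  assumes "N > 0"
  shows "ee N (- (l * (i + int N) + m * j + n * k)) = ee N (- (l * i + m * j + n * k))"
    and "ee N (- (l * i + m * (j + int N) + n * k)) = ee N (- (l * i + m * j + n * k))"
    and "ee N (- (l * i + m * j + n * (k + int N))) = ee N (- (l * i + m * j + n * k))"
proof -
  have e: "- (l * (i + int N) + m * j + n * k) = - (l * i + m * j + n * k) + (- l) * int N" by algebra
  show "ee N (- (l * (i + int N) + m * j + n * k)) = ee N (- (l * i + m * j + n * k))" unfolding e by (rule ee_perN[OF assms])
  have e: "- (l * i + m * (j + int N) + n * k) = - (l * i + m * j + n * k) + (- m) * int N" by algebra
  show "ee N (- (l * i + m * (j + int N) + n * k)) = ee N (- (l * i + m * j + n * k))" unfolding e by (rule ee_perN[OF assms])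
  have e: "- (l * i + m * j + n * (k + int N)) = - (l * i + m * j + n * k) + (- n) * int N" by algebra
  show "ee N (- (l * i + m * j + n * (k + int N))) = ee N (- (l * i + m * j + n * k))" unfolding e by (rule ee_perN[OF assms])
qed

lemma fcoef_shift_x:
  assumes "N > 0" "gper N g" "a \<in> {1, -1}"
  shows "fcoef N (\<lambda>i j k. g (i + a) j k) l m n = ee N (l * a) * fcoef N g l m n"
proof -
  define G where "G i = (\<Sum>j\<in>{1..int N}. \<Sum>k\<in>{1..int N}. g i j k * ee N (- (l * i + m * j + n * k)))" for i
  have "gsum N (\<lambda>i j k. g (i + a) j k * ee N (- (l * i + m * j + n * k))) = (\<Sum>i\<in>{1..int N}. ee N (l * a) * G (i + a))"
    unfolding gsum_def G_def sum_distrib_left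
    by (intro sum.cong refl) (simp add: ee_add[symmetric] algebra_simps)
  also have "\<dots> = ee N (l * a) * (\<Sum>i\<in>{1..int N}. G i)"
  proof -
    have "\<And>i. G (i + int N) = G i"
    proof -
      fix i
      have "\<And>j k. g (i + int N) j k = g i j k" using assms(2) unfolding gper_def by blast
      moreover note ee_shift3(1)[OF assms(1)]
      ultimately show "G (i + int N) = G i" unfolding G_def by (simp only:)
    qed
    thus ?thesis by (simp add: sum_distrib_left[symmetric] sum_shift_pm[OF assms(3)])
  qed
  finally show ?thesis unfolding fcoef_ee G_def gsum_def by (simp add: mult_ac)
qed

lemma fcoef_shift_y:
  assumes "N > 0" "gper N g" "a \<in> {1, -1}"
  shows "fcoef N (\<lambda>i j k. g i (j + a) k) l m n = ee N (m * a) * fcoef N g l m n"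
proof -
  define G where "G i j = (\<Sum>k\<in>{1..int N}. g i j k * ee N (- (l * i + m * j + n * k)))" for i j
  have "gsum N (\<lambda>i j k. g i (j + a) k * ee N (- (l * i + m * j + n * k))) = (\<Sum>i\<in>{1..int N}. ee N (m * a) * (\<Sum>j\<in>{1..int N}. G i (j + a)))"
    unfolding gsum_def G_def sum_distrib_left
    by (intro sum.cong refl) (simp add: ee_add[symmetric] algebra_simps)
  also have "\<dots> = (\<Sum>i\<in>{1..int N}. ee N (m * a) * (\<Sum>j\<in>{1..int N}. G i j))"
  proof -
    have "\<And>i j. G i (j + int N) = G i j"
    proof -
      fix i j
      have "\<And>k. g i (j + int N) k = g i j k" using assms(2) unfolding gper_def by blast
      moreover note ee_shift3(2)[OF assms(1)]
      ultimately show "G i (j + int N) = G i j" unfolding G_def by (simp only:)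
    qed
    thus ?thesis by (simp add: sum_shift_pm[OF assms(3)])
  qed
  finally show ?thesis unfolding fcoef_ee G_def gsum_def by (simp add: sum_distrib_left mult_ac)
qed

lemma fcoef_shift_z:
  assumes "N > 0" "gper N g" "a \<in> {1, -1}"
  shows "fcoef N (\<lambda>i j k. g i j (k + a)) l m n = ee N (n * a) * fcoef N g l m n"
proof -
  define G where "G i j k = g i j k * ee N (- (l * i + m * j + n * k))" for i j k
  have "gsum N (\<lambda>i j k. g i j (k + a) * ee N (- (l * i + m * j + n * k))) = (\<Sum>i\<in>{1..int N}. \<Sum>j\<in>{1..int N}. ee N (n * a) * (\<Sum>k\<in>{1..int N}. G i j (k + a)))"
    unfolding gsum_def G_def sum_distrib_left
    by (intro sum.cong refl) (simp add: ee_add[symmetric] algebra_simps)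
  also have "\<dots> = (\<Sum>i\<in>{1..int N}. \<Sum>j\<in>{1..int N}. ee N (n * a) * (\<Sum>k\<in>{1..int N}. G i j k))"
  proof -
    have "\<And>i j k. G i j (k + int N) = G i j k"
    proof -
      fix i j k
      have "g i j (k + int N) = g i j k" using assms(2) unfolding gper_def by blast
      moreover note ee_shift3(3)[OF assms(1)]
      ultimately show "G i j (k + int N) = G i j k" unfolding G_def by (simp only:)
    qed
    thus ?thesis by (simp add: sum_shift_pm[OF assms(3)])
  qed
  finally show ?thesis unfolding fcoef_ee G_def gsum_def by (simp add: sum_distrib_left mult_ac)
qed

lemma fcoef_diff_mult: "fcoef N (\<lambda>i j k. (f i j k - g i j k) * c) l m n = (fcoef N f l m n - fcoef N g l m n) * c"
  unfolding fcoef_ee gsum_def by (simp add: algebra_simps sum_subtractf sum_distrib_left sum_distrib_right)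

lemma fcoef_add3: "fcoef N (\<lambda>i j k. a i j k + b i j k + c i j k) l m n = fcoef N a l m n + fcoef N b l m n + fcoef N c l m n"
  unfolding fcoef_ee gsum_def by (simp add: algebra_simps sum.distrib)

lemma gper_Dx: "gper N f \<Longrightarrow> gper N (Dx N f)"
  unfolding gper_def Dx_def by (metis add.commute add.left_commute)
lemma gper_Dy: "gper N f \<Longrightarrow> gper N (Dy N f)"
  unfolding gper_def Dy_def by (metis add.commute add.left_commute)
lemma gper_Dz: "gper N f \<Longrightarrow> gper N (Dz N f)"
  unfolding gper_def Dz_def by (metis add.commute add.left_commute)

lemma fcoef_Dx: "N > 0 \<Longrightarrow> gper N f \<Longrightarrow> fcoef N (Dx N f) l m n = (ee N l - 1) * of_nat N * fcoef N f l m n"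
  unfolding Dx_def fcoef_diff_mult using fcoef_shift_x[of N f 1 l m n] by (simp add: algebra_simps)
lemma fcoef_Dy: "N > 0 \<Longrightarrow> gper N f \<Longrightarrow> fcoef N (Dy N f) l m n = (ee N m - 1) * of_nat N * fcoef N f l m n"
  unfolding Dy_def fcoef_diff_mult using fcoef_shift_y[of N f 1 l m n] by (simp add: algebra_simps)
lemma fcoef_Dz: "N > 0 \<Longrightarrow> gper N f \<Longrightarrow> fcoef N (Dz N f) l m n = (ee N n - 1) * of_nat N * fcoef N f l m n"
  unfolding Dz_def fcoef_diff_mult using fcoef_shift_z[of N f 1 l m n] by (simp add: algebra_simps)

lemma fcoef_mx: "N > 0 \<Longrightarrow> gper N g \<Longrightarrow> fcoef N (\<lambda>i j k. g (i - 1) j k) l m n = ee N (- l) * fcoef N g l m n"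
  using fcoef_shift_x[of N g "-1" l m n] by simp
lemma fcoef_my: "N > 0 \<Longrightarrow> gper N g \<Longrightarrow> fcoef N (\<lambda>i j k. g i (j - 1) k) l m n = ee N (- m) * fcoef N g l m n"
  using fcoef_shift_y[of N g "-1" l m n] by simp
lemma fcoef_mz: "N > 0 \<Longrightarrow> gper N g \<Longrightarrow> fcoef N (\<lambda>i j k. g i j (k - 1)) l m n = ee N (- n) * fcoef N g l m n"
  using fcoef_shift_z[of N g "-1" l m n] by simp

definition om :: "nat \<Rightarrow> int \<Rightarrow> int \<Rightarrow> int \<Rightarrow> real" where
  "om N l m n = (real N)\<^sup>2 * ((cmod (ee N l - 1))\<^sup>2 + (cmod (ee N m - 1))\<^sup>2 + (cmod (ee N n - 1))\<^sup>2)"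

lemma ee_key: "(1 - ee N (- l)) * (ee N l - 1) = - complex_of_real ((cmod (ee N l - 1))\<^sup>2)"
proof -
  have "(1 - ee N (- l)) * (ee N l - 1) = - ((ee N l - 1) * cnj (ee N l - 1))"
    by (simp add: ee_cnj[symmetric] algebra_simps)
  also have "\<dots> = - complex_of_real ((cmod (ee N l - 1))\<^sup>2)" by (simp only: cnj_mult_self)
  finally show ?thesis .
qed

lemma fcoef_lap:
  assumes "N > 0" "gper N f"
  shows "fcoef N (lap N f) l m n = - complex_of_real (om N l m n) * fcoef N f l m n"
proof -
  have "fcoef N (lap N f) l m n =
      (fcoef N (Dx N f) l m n - ee N (- l) * fcoef N (Dx N f) l m n) * of_nat N
    + (fcoef N (Dy N f) l m n - ee N (- m) * fcoef N (Dy N f) l m n) * of_nat N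
    + (fcoef N (Dz N f) l m n - ee N (- n) * fcoef N (Dz N f) l m n) * of_nat N"
    unfolding lap_def fcoef_add3 fcoef_diff_mult
    by (simp only: fcoef_mx[OF assms(1) gper_Dx[OF assms(2)]] fcoef_my[OF assms(1) gper_Dy[OF assms(2)]]
        fcoef_mz[OF assms(1) gper_Dz[OF assms(2)]])
  also have "\<dots> = ((1 - ee N (- l)) * (ee N l - 1) + (1 - ee N (- m)) * (ee N m - 1) + (1 - ee N (- n)) * (ee N n - 1))
        * (of_nat N)\<^sup>2 * fcoef N f l m n"
    unfolding fcoef_Dx[OF assms] fcoef_Dy[OF assms] fcoef_Dz[OF assms] by (simp add: algebra_simps power2_eq_square)
  also have "\<dots> = - complex_of_real (om N l m n) * fcoef N f l m n"
    unfolding ee_key om_def by (simp add: algebra_simps)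
  finally show ?thesis .
qed

lemma phi1_bounds: assumes "x \<ge> 0" shows "0 \<le> phi1 x" "phi1 x \<le> 1"
proof -
  have e1: "exp (- x) \<le> 1" using assms by simp
  have e2: "1 - x \<le> exp (- x)" using exp_ge_add_one_self[of "-x"] by simp
  show "0 \<le> phi1 x" unfolding phi1_def using e1 assms by (auto intro: divide_nonneg_nonneg)
  show "phi1 x \<le> 1" unfolding phi1_def using e2 assms by (auto simp: divide_le_eq)
qed

lemma lam_nonneg: "0 \<le> lam N l m n"
  unfolding lam_def by simp

definition pp :: "nat \<Rightarrow> real \<Rightarrow> int \<times> int \<times> int \<Rightarrow> real" where
  "pp N \<tau> y = phi1 (\<tau> / 2 * tr (lam N) y)"

lemma pp_bounds: "\<tau> \<ge> 0 \<Longrightarrow> 0 \<le> pp N \<tau> y \<and> pp N \<tau> y \<le> 1"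
  unfolding pp_def using phi1_bounds lam_nonneg by (simp add: tr_def)

lemma gradG_eq:
  assumes "odd N" "\<tau> \<ge> 0" "gper N \<phi>"
  shows "gradG_sq N \<tau> \<phi> = (\<Sum>y\<in>MM N. pp N \<tau> y * tr (om N) y * (cmod (tr (fcoef N \<phi>) y))\<^sup>2)"
proof -
  have N0: "N > 0" using assms(1) by (cases N) auto
  have sq: "(sqrt (pp N \<tau> y))\<^sup>2 = pp N \<tau> y" for y using pp_bounds[OF assms(2)] by simp
  have "(gnorm2 N (Gh_half N \<tau> (Dx N \<phi>)))\<^sup>2 = (\<Sum>y\<in>MM N. pp N \<tau> y * (real N)\<^sup>2 * (cmod (ee N (fst y) - 1))\<^sup>2 * (cmod (tr (fcoef N \<phi>) y))\<^sup>2)"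
    unfolding Gh_half_def gn_fmult_sq[OF assms(1)]
  proof (rule sum.cong[OF refl])
    fix y :: "int \<times> int \<times> int"
    obtain l m n where y: "y = (l,m,n)" by (cases y) auto
    show "(tr (\<lambda>l m n. sqrt (phi1 (\<tau> / 2 * lam N l m n))) y)\<^sup>2 * (cmod (tr (fcoef N (Dx N \<phi>)) y))\<^sup>2 = pp N \<tau> y * (real N)\<^sup>2 * (cmod (ee N (fst y) - 1))\<^sup>2 * (cmod (tr (fcoef N \<phi>) y))\<^sup>2"
      using sq[of y] unfolding y by (simp add: fcoef_Dx[OF N0 assms(3)] pp_def norm_mult power_mult_distrib)
  qed
  moreover have "(gnorm2 N (Gh_half N \<tau> (Dy N \<phi>)))\<^sup>2 = (\<Sum>y\<in>MM N. pp N \<tau> y * (real N)\<^sup>2 * (cmod (ee N (fst (snd y)) - 1))\<^sup>2 * (cmod (tr (fcoef N \<phi>) y))\<^sup>2)"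
    unfolding Gh_half_def gn_fmult_sq[OF assms(1)]
  proof (rule sum.cong[OF refl])
    fix y :: "int \<times> int \<times> int"
    obtain l m n where y: "y = (l,m,n)" by (cases y) auto
    show "(tr (\<lambda>l m n. sqrt (phi1 (\<tau> / 2 * lam N l m n))) y)\<^sup>2 * (cmod (tr (fcoef N (Dy N \<phi>)) y))\<^sup>2 = pp N \<tau> y * (real N)\<^sup>2 * (cmod (ee N (fst (snd y)) - 1))\<^sup>2 * (cmod (tr (fcoef N \<phi>) y))\<^sup>2"
      using sq[of y] unfolding y by (simp add: fcoef_Dy[OF N0 assms(3)] pp_def norm_mult power_mult_distrib)
  qed
  moreover have "(gnorm2 N (Gh_half N \<tau> (Dz N \<phi>)))\<^sup>2 = (\<Sum>y\<in>MM N. pp N \<tau> y * (real N)\<^sup>2 * (cmod (ee N (snd (snd y)) - 1))\<^sup>2 * (cmod (tr (fcoef N \<phi>) y))\<^sup>2)"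
    unfolding Gh_half_def gn_fmult_sq[OF assms(1)]
  proof (rule sum.cong[OF refl])
    fix y :: "int \<times> int \<times> int"
    obtain l m n where y: "y = (l,m,n)" by (cases y) auto
    show "(tr (\<lambda>l m n. sqrt (phi1 (\<tau> / 2 * lam N l m n))) y)\<^sup>2 * (cmod (tr (fcoef N (Dz N \<phi>)) y))\<^sup>2 = pp N \<tau> y * (real N)\<^sup>2 * (cmod (ee N (snd (snd y)) - 1))\<^sup>2 * (cmod (tr (fcoef N \<phi>) y))\<^sup>2"
      using sq[of y] unfolding y by (simp add: fcoef_Dz[OF N0 assms(3)] pp_def norm_mult power_mult_distrib)
  qed
  ultimately show ?thesis unfolding gradG_sq_def
    by (simp add: sum.distrib[symmetric] om_def tr_def algebra_simps)
qed

lemma key_identity: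
  assumes "odd N" "\<tau> \<ge> 0" "gper N \<phi>"
  shows "Re (ginner N \<phi> (Gh N \<tau> (lap N \<phi>))) = - gradG_sq N \<tau> \<phi>"
proof -
  have N0: "N > 0" using assms(1) by (cases N) auto
  have "ginner N \<phi> (Gh N \<tau> (lap N \<phi>)) = (\<Sum>y\<in>MM N. - complex_of_real (pp N \<tau> y * tr (om N) y * (cmod (tr (fcoef N \<phi>) y))\<^sup>2))"
    unfolding Gh_def ginner_fmult
  proof (rule sum.cong[OF refl])
    fix y :: "int \<times> int \<times> int"
    obtain l m n where y: "y = (l,m,n)" by (cases y) auto
    have "tr (\<lambda>l m n. phi1 (\<tau> / 2 * lam N l m n)) y = pp N \<tau> y" unfolding y pp_def by simp
    moreover have "tr (fcoef N (lap N \<phi>)) y = - complex_of_real (tr (om N) y) * tr (fcoef N \<phi>) y"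
      unfolding y using fcoef_lap[OF N0 assms(3)] by simp
    ultimately show "complex_of_real (tr (\<lambda>l m n. phi1 (\<tau> / 2 * lam N l m n)) y) * tr (fcoef N (lap N \<phi>)) y * cnj (tr (fcoef N \<phi>) y) = - complex_of_real (pp N \<tau> y * tr (om N) y * (cmod (tr (fcoef N \<phi>) y))\<^sup>2)"
      by (simp add: cnj_mult_self mult.assoc)
  qed
  thus ?thesis unfolding gradG_eq[OF assms] by (simp add: Re_sum sum_negf)
qed

lemma Re_ginner_diff_left: "Re (ginner N (\<lambda>i j k. f i j k - g i j k) h) = Re (ginner N f h) - Re (ginner N g h)"
  unfolding Re_ginner by (simp add: tr_def algebra_simps sum_subtractf)

lemma Re_ginner_scale_right: "Re (ginner N f (\<lambda>i j k. complex_of_real c * g i j k)) = c * Re (ginner N f g)"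
  unfolding Re_ginner by (simp add: tr_def algebra_simps sum_distrib_left)

lemma lap_diff: "lap N (\<lambda>i j k. f i j k - g i j k) = (\<lambda>i j k. lap N f i j k - lap N g i j k)"
  unfolding lap_def Dx_def Dy_def Dz_def by (simp add: algebra_simps)

lemma lap_scale: "lap N (\<lambda>i j k. c * f i j k) = (\<lambda>i j k. c * lap N f i j k)"
  unfolding lap_def Dx_def Dy_def Dz_def by (simp add: algebra_simps)

lemma aux_ii:
  fixes d G :: real
  assumes "0 \<le> d" "d \<le> 1" "0 \<le> G"
  shows "(1 + d) * G + d\<^sup>2 \<le> 2 * (G + d\<^sup>2)"
proof -
  have a: "d * G \<le> G" using mult_right_mono[OF assms(2) assms(3)] by simp
  have b: "0 \<le> d\<^sup>2" by simp
  have c: "(1 + d) * G + d\<^sup>2 = G + d * G + d\<^sup>2" by algebra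
  have e: "2 * (G + d\<^sup>2) = G + G + d\<^sup>2 + d\<^sup>2" by algebra
  show ?thesis unfolding c e using a b by linarith
qed

lemma part_ii:
  fixes s d :: real
  assumes s: "s = gnorm2 N \<phi>t" and s1: "s \<ge> 1" and d: "d = s - 1" and d1: "d \<le> 1"
    and p1: "\<phi>1 = (\<lambda>i j k. \<phi>t i j k / complex_of_real s)"
    and P: "gnorm2 N \<Phi> = 1"
  shows "(gnorm2 N (\<lambda>i j k. \<Phi> i j k - \<phi>1 i j k))\<^sup>2 + d\<^sup>2 \<le> (gnorm2 N (\<lambda>i j k. \<Phi> i j k - \<phi>t i j k))\<^sup>2"
    and "(gnorm2 N (\<lambda>i j k. \<Phi> i j k - \<phi>t i j k))\<^sup>2 \<le> 2 * ((gnorm2 N (\<lambda>i j k. \<Phi> i j k - \<phi>1 i j k))\<^sup>2 + d\<^sup>2)"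
proof -
  let ?e = "\<lambda>i j k. \<Phi> i j k - \<phi>1 i j k"
  have p1': "\<phi>1 = (\<lambda>i j k. complex_of_real (1 / s) * \<phi>t i j k)" unfolding p1 by (simp add: field_simps)
  have n1: "gnorm2 N \<phi>1 = 1" unfolding p1' gn_scale norm_of_real using s s1 by simp
  have et: "(\<lambda>i j k. \<Phi> i j k - \<phi>t i j k) = (\<lambda>i j k. ?e i j k - complex_of_real d * \<phi>1 i j k)"
  proof (intro ext)
    fix i j k
    have sne: "complex_of_real s \<noteq> 0" using s1 by auto
    show "\<Phi> i j k - \<phi>t i j k = \<Phi> i j k - \<phi>1 i j k - complex_of_real d * \<phi>1 i j k"
      unfolding p1 d using sne by (simp add: field_simps)
  qed
  have "(gnorm2 N (\<lambda>i j k. \<Phi> i j k - \<phi>t i j k))\<^sup>2 = (gnorm2 N ?e)\<^sup>2 - 2 * Re (ginner N ?e (\<lambda>i j k. complex_of_real d * \<phi>1 i j k)) + (gnorm2 N (\<lambda>i j k. complex_of_real d * \<phi>1 i j k))\<^sup>2"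
    unfolding et by (rule gn_diff_sq)
  also have "Re (ginner N ?e (\<lambda>i j k. complex_of_real d * \<phi>1 i j k)) = d * (Re (ginner N \<Phi> \<phi>1) - 1)"
    unfolding Re_ginner_scale_right Re_ginner_diff_left ginner_self n1 by simp
  also have "gnorm2 N (\<lambda>i j k. complex_of_real d * \<phi>1 i j k) = \<bar>d\<bar>" unfolding gn_scale n1 by simp
  finally have A: "(gnorm2 N (\<lambda>i j k. \<Phi> i j k - \<phi>t i j k))\<^sup>2 = (gnorm2 N ?e)\<^sup>2 - 2 * (d * (Re (ginner N \<Phi> \<phi>1) - 1)) + d\<^sup>2"
    by simp
  have B: "(gnorm2 N ?e)\<^sup>2 = 2 - 2 * Re (ginner N \<Phi> \<phi>1)" unfolding gn_diff_sq P n1 by simp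
  have C: "(gnorm2 N (\<lambda>i j k. \<Phi> i j k - \<phi>t i j k))\<^sup>2 = (1 + d) * (gnorm2 N ?e)\<^sup>2 + d\<^sup>2"
  proof -
    have B': "Re (ginner N \<Phi> \<phi>1) = 1 - (gnorm2 N ?e)\<^sup>2 / 2" using B by linarith
    show ?thesis unfolding A B' by (simp add: algebra_simps)
  qed
  have d0: "d \<ge> 0" using d s1 by simp
  have g0: "0 \<le> (gnorm2 N ?e)\<^sup>2" by simp
  show "(gnorm2 N ?e)\<^sup>2 + d\<^sup>2 \<le> (gnorm2 N (\<lambda>i j k. \<Phi> i j k - \<phi>t i j k))\<^sup>2"
    unfolding C using d0 g0 by (simp add: algebra_simps)
  show "(gnorm2 N (\<lambda>i j k. \<Phi> i j k - \<phi>t i j k))\<^sup>2 \<le> 2 * ((gnorm2 N ?e)\<^sup>2 + d\<^sup>2)"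
    unfolding C using aux_ii[OF d0 d1 g0] .
qed

lemma ineq_a:
  fixes x a b b' \<tau> :: real
  assumes "0 \<le> a" "0 \<le> b'" "b' \<le> b" "0 \<le> x" "x \<le> a + b'" "0 < \<tau>" "\<tau> \<le> 1"
  shows "x\<^sup>2 \<le> (1 + \<tau>) * a\<^sup>2 + 2 / \<tau> * b\<^sup>2"
proof -
  have h0: "x\<^sup>2 \<le> (a + b)\<^sup>2" using assms by (intro power_mono) auto
  have h1: "(a + b)\<^sup>2 = a\<^sup>2 + 2 * a * b + b\<^sup>2" by (simp add: power2_eq_square algebra_simps)
  have h2: "2 * a * b \<le> \<tau> * a\<^sup>2 + b\<^sup>2 / \<tau>"
  proof -
    have "0 \<le> (\<tau> * a - b)\<^sup>2 / \<tau>" using assms by simp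
    also have "(\<tau> * a - b)\<^sup>2 / \<tau> = \<tau> * a\<^sup>2 + b\<^sup>2 / \<tau> - 2 * a * b"
      using assms(6) by (simp add: power2_eq_square field_simps)
    finally show ?thesis by simp
  qed
  have h3: "b\<^sup>2 \<le> b\<^sup>2 / \<tau>" using assms mult_right_le_one_le[of "b\<^sup>2" \<tau>] by (simp add: le_divide_eq)
  have h4: "2 / \<tau> * b\<^sup>2 = b\<^sup>2 / \<tau> + b\<^sup>2 / \<tau>" by simp
  have h5: "(1 + \<tau>) * a\<^sup>2 = a\<^sup>2 + \<tau> * a\<^sup>2" by (simp add: algebra_simps)
  show ?thesis unfolding h4 h5 using h0 h1 h2 h3 by linarith
qed

lemma ineq_b:
  fixes x a b :: real
  assumes "0 \<le> x" "x \<le> a + b" "0 \<le> a" "0 \<le> b"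
  shows "x\<^sup>2 \<le> 2 * a\<^sup>2 + 2 * b\<^sup>2"
proof -
  have "x\<^sup>2 \<le> (a + b)\<^sup>2" using assms by (intro power_mono) auto
  also have "\<dots> \<le> 2 * a\<^sup>2 + 2 * b\<^sup>2" using sum_squares_ge_zero[of "a - b" 0] by (simp add: power2_eq_square algebra_simps)
  finally show ?thesis .
qed

lemma part_iii_iv:
  fixes s d \<tau> Cs :: real
  assumes s: "s = gnorm2 N \<phi>t" and s1: "s \<ge> 1" and d: "d = s - 1"
    and p1: "\<phi>1 = (\<lambda>i j k. \<phi>t i j k / complex_of_real s)"
    and bd: "gnorm2 N (lap N \<Phi>) + gnorm2 N (lap N (\<lambda>i j k. \<Phi> i j k - \<phi>t i j k)) \<le> Cs + 4"
    and t: "0 < \<tau>" "\<tau> \<le> 1"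
  shows "(gnorm2 N (lap N (\<lambda>i j k. \<Phi> i j k - \<phi>1 i j k)))\<^sup>2 \<le> (1 + \<tau>) * (gnorm2 N (lap N (\<lambda>i j k. \<Phi> i j k - \<phi>t i j k)))\<^sup>2 + (2 * (Cs + 4)\<^sup>2) / \<tau> * d\<^sup>2"
    and "(gnorm2 N (lap N (\<lambda>i j k. \<Phi> i j k - \<phi>t i j k)))\<^sup>2 \<le> 2 * (gnorm2 N (lap N (\<lambda>i j k. \<Phi> i j k - \<phi>1 i j k)))\<^sup>2 + (2 * (Cs + 4)\<^sup>2) * d\<^sup>2"
proof -
  let ?X = "lap N (\<lambda>i j k. \<Phi> i j k - \<phi>t i j k)"
  let ?E = "lap N (\<lambda>i j k. \<Phi> i j k - \<phi>1 i j k)"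
  let ?P = "lap N \<phi>t"
  have d0: "0 \<le> d" using d s1 by simp
  have p1': "\<phi>1 = (\<lambda>i j k. complex_of_real (1 / s) * \<phi>t i j k)" unfolding p1 by (simp add: field_simps)
  have PX: "?P = (\<lambda>i j k. lap N \<Phi> i j k - ?X i j k)" unfolding lap_diff by simp
  have gP: "gnorm2 N ?P \<le> Cs + 4" unfolding PX using gn_diff[of N "lap N \<Phi>" ?X] bd by linarith
  have E1: "?E = (\<lambda>i j k. ?X i j k + complex_of_real (d / s) * ?P i j k)"
    unfolding lap_diff p1' lap_scale using s1 by (auto simp: d field_simps)
  have E2: "?X = (\<lambda>i j k. ?E i j k - complex_of_real (d / s) * ?P i j k)"
    unfolding E1 by simp
  have sc: "gnorm2 N (\<lambda>i j k. complex_of_real (d / s) * ?P i j k) \<le> d * (Cs + 4)"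
  proof -
    have "gnorm2 N (\<lambda>i j k. complex_of_real (d / s) * ?P i j k) = (d / s) * gnorm2 N ?P"
      unfolding gn_scale norm_of_real using d0 s1 by simp
    also have "\<dots> \<le> d * gnorm2 N ?P"
    proof -
      have "d * gnorm2 N ?P \<ge> 0" using d0 by simp
      from mult_left_mono[OF s1 this] show ?thesis using s1 by (simp add: divide_le_eq)
    qed
    also have "\<dots> \<le> d * (Cs + 4)" using gP d0 by (simp add: mult_left_mono)
    finally show ?thesis .
  qed
  have sc0: "0 \<le> gnorm2 N (\<lambda>i j k. complex_of_real (d / s) * ?P i j k)" by simp
  have "gnorm2 N ?E \<le> gnorm2 N ?X + gnorm2 N (\<lambda>i j k. complex_of_real (d / s) * ?P i j k)"
    by (subst E1) (rule gn_triangle)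
  from ineq_a[OF gn_ge0 sc0 sc gn_ge0 this t]
  have "(gnorm2 N ?E)\<^sup>2 \<le> (1 + \<tau>) * (gnorm2 N ?X)\<^sup>2 + 2 / \<tau> * (d * (Cs + 4))\<^sup>2" .
  also have "2 / \<tau> * (d * (Cs + 4))\<^sup>2 = (2 * (Cs + 4)\<^sup>2) / \<tau> * d\<^sup>2" by (simp add: power_mult_distrib)
  finally show "(gnorm2 N ?E)\<^sup>2 \<le> (1 + \<tau>) * (gnorm2 N ?X)\<^sup>2 + (2 * (Cs + 4)\<^sup>2) / \<tau> * d\<^sup>2" .
  have XE: "gnorm2 N ?X \<le> gnorm2 N ?E + d * (Cs + 4)"
    using gn_diff[of N ?E "\<lambda>i j k. complex_of_real (d / s) * ?P i j k"] sc E2 by simp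
  have dC: "0 \<le> d * (Cs + 4)" using sc0 sc by linarith
  from ineq_b[OF gn_ge0 XE gn_ge0 dC]
  have "(gnorm2 N ?X)\<^sup>2 \<le> 2 * (gnorm2 N ?E)\<^sup>2 + 2 * (d * (Cs + 4))\<^sup>2" .
  also have "2 * (d * (Cs + 4))\<^sup>2 = (2 * (Cs + 4)\<^sup>2) * d\<^sup>2" by (simp add: power_mult_distrib)
  finally show "(gnorm2 N ?X)\<^sup>2 \<le> 2 * (gnorm2 N ?E)\<^sup>2 + (2 * (Cs + 4)\<^sup>2) * d\<^sup>2" .
qed

lemma gninf_ge: "x \<in> QQ N \<Longrightarrow> cmod (tr f x) \<le> gnorminf N f"
proof -
  assume x: "x \<in> QQ N"
  have "cmod (tr f x) = (\<lambda>(i,j,k). cmod (f i j k)) x" by (simp add: tr_def split_beta)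
  also have "\<dots> \<in> (\<lambda>(i,j,k). cmod (f i j k)) ` ({1..int N} \<times> {1..int N} \<times> {1..int N})"
    using x unfolding QQ_def by (rule imageI)
  finally show ?thesis unfolding gnorminf_def by (intro Max_ge) auto
qed

lemma ginner_scale_right: "ginner N f (\<lambda>i j k. c * g i j k) = c * ginner N f g"
  unfolding ginner_prod by (simp add: sum_distrib_left mult_ac)

lemma Re_ginner_comb: "Re (ginner N f (\<lambda>i j k. a i j k - b i j k - c i j k + d i j k))
   = Re (ginner N f a) - Re (ginner N f b) - Re (ginner N f c) + Re (ginner N f d)"
  unfolding Re_ginner by (simp add: tr_def algebra_simps sum.distrib sum_subtractf)

lemma Re_ginner_div2: "Re (ginner N f (\<lambda>i j k. g i j k / 2)) = Re (ginner N f g) / 2"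
proof -
  have "(\<lambda>i j k. g i j k / 2) = (\<lambda>i j k. complex_of_real (1/2) * g i j k)" by (simp add: field_simps)
  thus ?thesis by (simp only: Re_ginner_scale_right)
qed

lemma Re_ginner_add_left: "Re (ginner N (\<lambda>i j k. a i j k + b i j k) h) = Re (ginner N a h) + Re (ginner N b h)"
  unfolding Re_ginner by (simp add: tr_def algebra_simps sum.distrib)

lemma gradG_nonneg: "0 \<le> gradG_sq N \<tau> f"
  unfolding gradG_sq_def by simp

lemma stage_bound:
  fixes Cs \<beta> \<tau> A :: real
  assumes Cs: "Cs > 0" and \<beta>: "\<beta> > 0" and N: "odd N" and \<tau>: "\<tau> > 0" and A: "A \<ge> 0"
    and V: "gnorminf N V \<le> Cs" and per: "gper N \<phi>" and n1: "gnorm2 N \<phi> = 1"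
    and inf: "gnorminf N \<phi> \<le> Cs + 1/2" and lp: "gnorm2 N (lap N \<phi>) \<le> Cs + 1/2"
    and sch: "scheme_stage N \<tau> A V \<beta> \<phi> \<phi>t"
  shows "1 \<le> gnorm2 N \<phi>t \<and> gnorm2 N \<phi>t - 1 \<le> ((Cs + 1/2) + 2 * Cs + 2 * \<beta> * (Cs + 1/2)\<^sup>2)\<^sup>2 * \<tau>\<^sup>2"
proof -
  define B where "B = Cs + 1/2"
  define W where "W = B + 2 * Cs + 2 * \<beta> * B\<^sup>2"
  define g1 where "g1 = (\<lambda>i j k. Gh N \<tau> (lap N \<phi>) i j k / 2)"
  define g2 where "g2 = (\<lambda>i j k. V i j k * \<phi> i j k)"
  define g3 where "g3 = (\<lambda>i j k. complex_of_real \<beta> * (complex_of_real (cmod (\<phi> i j k)))\<^sup>2 * \<phi> i j k)"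
  define lg where "lg = lagr N \<tau> V \<beta> \<phi>"
  define g4 where "g4 = (\<lambda>i j k. lg * \<phi> i j k)"
  define w where "w = (\<lambda>i j k. g1 i j k - g2 i j k - g3 i j k + g4 i j k)"
  define c where "c = \<tau> / (1 + A * \<tau>)"
  have B0: "B \<ge> 0" using Cs unfolding B_def by simp
  have Atau: "1 + A * \<tau> \<ge> 1" using A \<tau> by simp
  have c0: "0 < c" unfolding c_def using Atau \<tau> by simp
  have ct: "c \<le> \<tau>" unfolding c_def using Atau \<tau> by (simp add: divide_le_eq)
  have phit: "\<phi>t = (\<lambda>i j k. \<phi> i j k + complex_of_real c * w i j k)"
  proof (intro ext)
    fix i j k
    have e: "(\<phi>t i j k - \<phi> i j k) / complex_of_real \<tau> = w i j k - complex_of_real A * (\<phi>t i j k - \<phi> i j k)"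
      using sch unfolding scheme_stage_def w_def g1_def g2_def g3_def g4_def lg_def by simp
    have t0: "complex_of_real \<tau> \<noteq> 0" using \<tau> by simp
    have a0: "complex_of_real (1 + A * \<tau>) \<noteq> 0" using Atau by (metis of_real_eq_0_iff not_one_le_zero)
    have "(\<phi>t i j k - \<phi> i j k) * complex_of_real (1 + A * \<tau>) = complex_of_real \<tau> * w i j k"
      using e t0 by (simp add: field_simps)
    hence "\<phi>t i j k - \<phi> i j k = complex_of_real c * w i j k"
      unfolding c_def using a0 by (simp add: field_simps)
    thus "\<phi>t i j k = \<phi> i j k + complex_of_real c * w i j k" by (simp add: algebra_simps)
  qed
  have ptV: "cmod (tr V x) \<le> Cs" if "x \<in> QQ N" for x using gninf_ge[OF that, of V] V by linarith
  have ptP: "cmod (tr \<phi> x) \<le> B" if "x \<in> QQ N" for x using gninf_ge[OF that, of \<phi>] inf unfolding B_def by linarith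
  have Gbd: "gnorm2 N (Gh N \<tau> (lap N \<phi>)) \<le> B"
  proof -
    have "gnorm2 N (Gh N \<tau> (lap N \<phi>)) \<le> gnorm2 N (lap N \<phi>)"
      unfolding Gh_def
    proof (rule fmult_contr[OF N])
      fix y assume "y \<in> MM N"
      have "tr (\<lambda>l m n. phi1 (\<tau> / 2 * lam N l m n)) y = pp N \<tau> y" by (simp add: pp_def tr_def)
      thus "\<bar>tr (\<lambda>l m n. phi1 (\<tau> / 2 * lam N l m n)) y\<bar> \<le> 1" using pp_bounds[of \<tau> N y] \<tau> by simp
    qed
    thus ?thesis using lp unfolding B_def by linarith
  qed
  have n_g1: "gnorm2 N g1 \<le> B / 2"
  proof -
    have "g1 = (\<lambda>i j k. complex_of_real (1/2) * Gh N \<tau> (lap N \<phi>) i j k)" unfolding g1_def by simp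
    hence "gnorm2 N g1 = 1/2 * gnorm2 N (Gh N \<tau> (lap N \<phi>))" by (simp only: gn_scale) simp
    thus ?thesis using Gbd by simp
  qed
  have n_g2: "gnorm2 N g2 \<le> Cs"
  proof -
    have "gnorm2 N g2 \<le> Cs * gnorm2 N \<phi>"
    proof (rule gn_ptwise)
      fix x assume x: "x \<in> QQ N"
      show "cmod (tr g2 x) \<le> Cs * cmod (tr \<phi> x)"
        unfolding g2_def tr_def norm_mult using ptV[OF x] by (simp add: tr_def mult_right_mono)
    qed (use Cs in simp)
    thus ?thesis using n1 by simp
  qed
  have n_g3: "gnorm2 N g3 \<le> \<beta> * B\<^sup>2"
  proof -
    have "gnorm2 N g3 \<le> (\<beta> * B\<^sup>2) * gnorm2 N \<phi>"
    proof (rule gn_ptwise)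
      fix x assume x: "x \<in> QQ N"
      have "(cmod (tr \<phi> x))\<^sup>2 \<le> B\<^sup>2" using ptP[OF x] by (simp add: power_mono)
      hence "\<beta> * (cmod (tr \<phi> x))\<^sup>2 * cmod (tr \<phi> x) \<le> \<beta> * B\<^sup>2 * cmod (tr \<phi> x)"
        using \<beta> by (simp add: mult_right_mono)
      thus "cmod (tr g3 x) \<le> \<beta> * B\<^sup>2 * cmod (tr \<phi> x)"
        unfolding g3_def tr_def using \<beta> by (simp add: norm_mult norm_power tr_def)
    qed (use \<beta> in simp)
    thus ?thesis using n1 by simp
  qed
  have key: "Re (ginner N \<phi> (Gh N \<tau> (lap N \<phi>))) = - gradG_sq N \<tau> \<phi>"
    using key_identity[OF N _ per] \<tau> by simp
  have gG: "gradG_sq N \<tau> \<phi> \<le> B"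
  proof -
    have "gradG_sq N \<tau> \<phi> \<le> cmod (ginner N \<phi> (Gh N \<tau> (lap N \<phi>)))"
      using key abs_Re_le_cmod[of "ginner N \<phi> (Gh N \<tau> (lap N \<phi>))"] by linarith
    also have "\<dots> \<le> gnorm2 N \<phi> * gnorm2 N (Gh N \<tau> (lap N \<phi>))" by (rule ginner_CS)
    finally show ?thesis using Gbd n1 by simp
  qed
  have glg: "cmod lg \<le> B / 2 + Cs + \<beta> * B\<^sup>2"
  proof -
    have "cmod lg \<le> cmod (complex_of_real (gradG_sq N \<tau> \<phi> / 2)) + cmod (ginner N (\<lambda>i j k. g2 i j k + g3 i j k) \<phi>)"
      unfolding lg_def lagr_def g2_def g3_def by (rule norm_triangle_ineq)
    also have "cmod (complex_of_real (gradG_sq N \<tau> \<phi> / 2)) \<le> B / 2"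
      using gG gradG_nonneg[of N \<tau> \<phi>] by simp
    also have "cmod (ginner N (\<lambda>i j k. g2 i j k + g3 i j k) \<phi>) \<le> gnorm2 N (\<lambda>i j k. g2 i j k + g3 i j k) * gnorm2 N \<phi>"
      by (rule ginner_CS)
    also have "\<dots> \<le> Cs + \<beta> * B\<^sup>2" using gn_triangle[of N g2 g3] n_g2 n_g3 n1 by simp
    finally show ?thesis by simp
  qed
  have n_g4: "gnorm2 N g4 = cmod lg" unfolding g4_def gn_scale n1 by simp
  have n_w: "gnorm2 N w \<le> W"
  proof -
    have "gnorm2 N w \<le> gnorm2 N (\<lambda>i j k. g1 i j k - g2 i j k - g3 i j k) + gnorm2 N g4"
      unfolding w_def by (rule gn_triangle)
    also have "gnorm2 N (\<lambda>i j k. g1 i j k - g2 i j k - g3 i j k) \<le> gnorm2 N (\<lambda>i j k. g1 i j k - g2 i j k) + gnorm2 N g3"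
      by (rule gn_diff)
    also have "gnorm2 N (\<lambda>i j k. g1 i j k - g2 i j k) \<le> gnorm2 N g1 + gnorm2 N g2"
      by (rule gn_diff)
    finally show ?thesis using n_g1 n_g2 n_g3 n_g4 glg unfolding W_def by simp
  qed
  have orth: "Re (ginner N \<phi> w) = 0"
  proof -
    have r1: "Re (ginner N \<phi> g1) = - gradG_sq N \<tau> \<phi> / 2" unfolding g1_def Re_ginner_div2 key by simp
    have r4: "Re (ginner N \<phi> g4) = Re lg"
      unfolding g4_def ginner_scale_right ginner_self n1 by simp
    have rl: "Re lg = gradG_sq N \<tau> \<phi> / 2 + Re (ginner N \<phi> g2) + Re (ginner N \<phi> g3)"
    proof -
      have "Re lg = gradG_sq N \<tau> \<phi> / 2 + Re (ginner N (\<lambda>i j k. g2 i j k + g3 i j k) \<phi>)"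
        unfolding lg_def lagr_def g2_def g3_def by simp
      thus ?thesis unfolding Re_ginner_add_left Re_ginner_sym[of N g2] Re_ginner_sym[of N g3] by simp
    qed
    show ?thesis unfolding w_def Re_ginner_comb r1 r4 rl by simp
  qed
  have sq: "(gnorm2 N \<phi>t)\<^sup>2 = 1 + c\<^sup>2 * (gnorm2 N w)\<^sup>2"
  proof -
    have "(gnorm2 N \<phi>t)\<^sup>2 = (gnorm2 N \<phi>)\<^sup>2 + 2 * Re (ginner N \<phi> (\<lambda>i j k. complex_of_real c * w i j k)) + (gnorm2 N (\<lambda>i j k. complex_of_real c * w i j k))\<^sup>2"
      unfolding phit by (rule gn_add_sq)
    also have "Re (ginner N \<phi> (\<lambda>i j k. complex_of_real c * w i j k)) = 0"
      unfolding Re_ginner_scale_right orth by simp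
    also have "gnorm2 N (\<lambda>i j k. complex_of_real c * w i j k) = c * gnorm2 N w"
      unfolding gn_scale using c0 by simp
    finally show ?thesis using n1 by (simp add: power_mult_distrib)
  qed
  have s1: "1 \<le> gnorm2 N \<phi>t"
  proof -
    have "1 \<le> (gnorm2 N \<phi>t)\<^sup>2" unfolding sq by simp
    thus ?thesis using gn_ge0[of N \<phi>t] power2_le_imp_le[of 1 "gnorm2 N \<phi>t"] by simp
  qed
  have "gnorm2 N \<phi>t - 1 \<le> (gnorm2 N \<phi>t)\<^sup>2 - 1"
    using s1 by (simp add: power2_eq_square)
  also have "\<dots> = (c * gnorm2 N w)\<^sup>2" unfolding sq by (simp add: power_mult_distrib)
  also have "\<dots> \<le> (\<tau> * W)\<^sup>2"
    using c0 ct n_w by (intro power_mono mult_mono) auto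
  finally show ?thesis using s1 unfolding W_def B_def by (simp add: power_mult_distrib mult.commute)
qed

lemma lin4: "a \<le> Cs \<Longrightarrow> b \<le> 2 * (p + q) \<Longrightarrow> p \<le> 1 \<Longrightarrow> q \<le> 1 \<Longrightarrow> a + b \<le> Cs + (4::real)"
  by (smt (verit))

theorem proposition4p3:
  fixes Cs \<beta> :: real
  assumes "Cs > 0" and "\<beta> > 0"
  shows "\<exists>C6 C7 C8 \<tau>0 h0. C6 > 0 \<and> C7 > 0 \<and> C8 > 0 \<and> \<tau>0 > 0 \<and> h0 > 0 \<and>
    (\<forall>(N::nat) (\<tau>::real) (A::real) (V::grid) (\<phi>::grid) (\<phi>t::grid) (\<phi>1::grid) (\<Phi>::grid).
       odd N \<and> \<tau> > 0 \<and> \<tau> \<le> \<tau>0 \<and> 1 / real N \<le> h0 \<and> A \<ge> 0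
       \<and> gper N V \<and> (\<forall>i j k. Im (V i j k) = 0) \<and> gnorminf N V \<le> Cs
       \<and> gper N \<phi> \<and> gnorm2 N \<phi> = 1 \<and> gnorminf N \<phi> \<le> Cs + 1/2
       \<and> gnorm2 N (lap N \<phi>) \<le> Cs + 1/2
       \<and> scheme_stage N \<tau> A V \<beta> \<phi> \<phi>t
       \<and> \<phi>1 = (\<lambda>i j k. \<phi>t i j k / complex_of_real (gnorm2 N \<phi>t))
       \<and> gper N \<Phi> \<and> gnorm2 N \<Phi> = 1 \<and> gnorm2 N (lap N \<Phi>) \<le> Cs
       \<and> gnorm2 N (lap N (\<lambda>i j k. \<Phi> i j k - \<phi>t i j k))
            \<le> 2 * (\<tau> powr (7/8) + (1 / real N) powr (7/4))
     \<longrightarrow>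
       (let et = (\<lambda>i j k. \<Phi> i j k - \<phi>t i j k);
            e = (\<lambda>i j k. \<Phi> i j k - \<phi>1 i j k);
            d = gnorm2 N \<phi>t - 1 in
         0 \<le> d \<and> d \<le> C6 * \<tau>\<^sup>2
       \<and> (gnorm2 N e)\<^sup>2 + d\<^sup>2 \<le> (gnorm2 N et)\<^sup>2
       \<and> (gnorm2 N et)\<^sup>2 \<le> 2 * ((gnorm2 N e)\<^sup>2 + d\<^sup>2)
       \<and> (gnorm2 N (lap N e))\<^sup>2 \<le> (1 + \<tau>) * (gnorm2 N (lap N et))\<^sup>2 + C7 / \<tau> * d\<^sup>2
       \<and> (gnorm2 N (lap N et))\<^sup>2 \<le> 2 * (gnorm2 N (lap N e))\<^sup>2 + C8 * d\<^sup>2))"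
proof -
  define W where "W = (Cs + 1/2) + 2 * Cs + 2 * \<beta> * (Cs + 1/2)\<^sup>2"
  define C6 where "C6 = W\<^sup>2"
  define C7 where "C7 = 2 * (Cs + 4)\<^sup>2"
  have W0: "W > 0" unfolding W_def using assms by (simp add: add_pos_nonneg)
  have C60: "C6 > 0" unfolding C6_def using W0 by simp
  have C70: "C7 > 0" unfolding C7_def using assms by simp
  have t00: "1 / (C6 + 1) > 0" using C60 by simp
  show ?thesis
  proof (rule exI[of _ C6], rule exI[of _ C7], rule exI[of _ C7], rule exI[of _ "1 / (C6 + 1)"], rule exI[of _ "1::real"], intro conjI C60 C70 t00 zero_less_one allI impI)
    fix N :: nat and \<tau> A :: real and V \<phi> \<phi>t \<phi>1 \<Phi> :: grid
    assume H: "odd N \<and> \<tau> > 0 \<and> \<tau> \<le> 1 / (C6 + 1) \<and> 1 / real N \<le> 1 \<and> A \<ge> 0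
       \<and> gper N V \<and> (\<forall>i j k. Im (V i j k) = 0) \<and> gnorminf N V \<le> Cs
       \<and> gper N \<phi> \<and> gnorm2 N \<phi> = 1 \<and> gnorminf N \<phi> \<le> Cs + 1/2
       \<and> gnorm2 N (lap N \<phi>) \<le> Cs + 1/2
       \<and> scheme_stage N \<tau> A V \<beta> \<phi> \<phi>t
       \<and> \<phi>1 = (\<lambda>i j k. \<phi>t i j k / complex_of_real (gnorm2 N \<phi>t))
       \<and> gper N \<Phi> \<and> gnorm2 N \<Phi> = 1 \<and> gnorm2 N (lap N \<Phi>) \<le> Cs
       \<and> gnorm2 N (lap N (\<lambda>i j k. \<Phi> i j k - \<phi>t i j k))
            \<le> 2 * (\<tau> powr (7/8) + (1 / real N) powr (7/4))"
    define s where "s = gnorm2 N \<phi>t"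
    define d where "d = s - 1"
    have t1: "\<tau> \<le> 1" using H C60 by (meson order_trans divide_le_eq_1_pos less_add_same_cancel2 less_imp_le add_pos_pos zero_less_one)
    have st: "1 \<le> s \<and> s - 1 \<le> C6 * \<tau>\<^sup>2"
      using stage_bound[OF assms _ _ _ _ _ _ _ _] H unfolding s_def C6_def W_def by blast
    have d0: "0 \<le> d" using st unfolding d_def by simp
    have dC: "d \<le> C6 * \<tau>\<^sup>2" using st unfolding d_def by simp
    have d1: "d \<le> 1"
    proof -
      have "C6 * \<tau>\<^sup>2 \<le> C6 * \<tau>" using C60 H t1 by (simp add: power2_eq_square mult_right_le_one_le)
      also have "\<dots> \<le> C6 * (1 / (C6 + 1))"
      proof -
        have tt: "\<tau> \<le> 1 / (C6 + 1)" using H by blast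
        show ?thesis by (rule mult_left_mono[OF tt]) (use C60 in simp)
      qed
      also have "\<dots> \<le> 1" using C60 by (simp add: divide_le_eq)
      finally show ?thesis using dC by simp
    qed
    have p1: "\<phi>1 = (\<lambda>i j k. \<phi>t i j k / complex_of_real s)" using H unfolding s_def by blast
    have ii: "(gnorm2 N (\<lambda>i j k. \<Phi> i j k - \<phi>1 i j k))\<^sup>2 + d\<^sup>2 \<le> (gnorm2 N (\<lambda>i j k. \<Phi> i j k - \<phi>t i j k))\<^sup>2"
             "(gnorm2 N (\<lambda>i j k. \<Phi> i j k - \<phi>t i j k))\<^sup>2 \<le> 2 * ((gnorm2 N (\<lambda>i j k. \<Phi> i j k - \<phi>1 i j k))\<^sup>2 + d\<^sup>2)"
      using part_ii[OF s_def _ d_def d1 p1] st H by auto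
    have pw: "\<tau> powr (7/8) \<le> 1" "(1 / real N) powr (7/4) \<le> 1"
      using H t1 by (auto intro!: powr_le1)
    have bd: "gnorm2 N (lap N \<Phi>) + gnorm2 N (lap N (\<lambda>i j k. \<Phi> i j k - \<phi>t i j k)) \<le> Cs + 4"
    proof -
      have h1: "gnorm2 N (lap N \<Phi>) \<le> Cs" using H by blast
      have h2: "gnorm2 N (lap N (\<lambda>i j k. \<Phi> i j k - \<phi>t i j k)) \<le> 2 * (\<tau> powr (7/8) + (1 / real N) powr (7/4))"
        using H by blast
      show ?thesis by (rule lin4[OF h1 h2 pw])
    qed
    have iii: "(gnorm2 N (lap N (\<lambda>i j k. \<Phi> i j k - \<phi>1 i j k)))\<^sup>2 \<le> (1 + \<tau>) * (gnorm2 N (lap N (\<lambda>i j k. \<Phi> i j k - \<phi>t i j k)))\<^sup>2 + C7 / \<tau> * d\<^sup>2"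
         "(gnorm2 N (lap N (\<lambda>i j k. \<Phi> i j k - \<phi>t i j k)))\<^sup>2 \<le> 2 * (gnorm2 N (lap N (\<lambda>i j k. \<Phi> i j k - \<phi>1 i j k)))\<^sup>2 + C7 * d\<^sup>2"
      using part_iii_iv[OF s_def _ d_def p1 bd _ t1] st H unfolding C7_def by auto
    show "let et = (\<lambda>i j k. \<Phi> i j k - \<phi>t i j k);
            e = (\<lambda>i j k. \<Phi> i j k - \<phi>1 i j k);
            d = gnorm2 N \<phi>t - 1 in
         0 \<le> d \<and> d \<le> C6 * \<tau>\<^sup>2
       \<and> (gnorm2 N e)\<^sup>2 + d\<^sup>2 \<le> (gnorm2 N et)\<^sup>2
       \<and> (gnorm2 N et)\<^sup>2 \<le> 2 * ((gnorm2 N e)\<^sup>2 + d\<^sup>2)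
       \<and> (gnorm2 N (lap N e))\<^sup>2 \<le> (1 + \<tau>) * (gnorm2 N (lap N et))\<^sup>2 + C7 / \<tau> * d\<^sup>2
       \<and> (gnorm2 N (lap N et))\<^sup>2 \<le> 2 * (gnorm2 N (lap N e))\<^sup>2 + C7 * d\<^sup>2"
      unfolding Let_def using d0 dC ii iii unfolding d_def s_def by blast
  qed
qed


end
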